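(* Let $G=(V,E)$ be a graph on $n$ vertices, $w$ a legal weight assignment for $G$, $0<\beta<1$, and $(z_v)_{v\in V}$ complex activities with $|z_v|\ge1$ for all $v$, such that $Z_w(G)\neq0$. Then $\Re\left(\frac{\mathcal{D}_GZ_w(G)}{Z_w(G)}\right)\ge \frac n2$.
   Context: A weight assignment $w:V\to\mathbb{Z}_{>0}$ is legal if $w(v)\ge\deg(v)$ for every $v$. $Z_w(G)=\sum_{\sigma\in\{+,-\}^V}\beta^{d(\sigma)}\prod_{v:\sigma(v)=+}z_v^{w(v)}$, where $d(\sigma)$ is the number of edges $\{u,v\}$ with $\sigma(u)\ne\sigma(v)$, and $\mathcal{D}_G=\sum_{v\in V}z_v\frac{\partial}{\partial z_v}$. *)

theory Defs
  imports "HOL-Analysis.Analysis"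
begin

definition simple_graph :: "'a set \<Rightarrow> 'a set set \<Rightarrow> bool" where
  "simple_graph V E \<longleftrightarrow> finite V \<and> (\<forall>e\<in>E. e \<subseteq> V \<and> card e = 2)"

definition degree :: "'a set set \<Rightarrow> 'a \<Rightarrow> nat" where
  "degree E v = card {e\<in>E. v \<in> e}"

definition legal_weight :: "'a set \<Rightarrow> 'a set set \<Rightarrow> ('a \<Rightarrow> nat) \<Rightarrow> bool" where
  "legal_weight V E w \<longleftrightarrow> (\<forall>v\<in>V. 0 < w v \<and> degree E v \<le> w v)"

text \<open>A sign configuration sigma is encoded by the set S of vertices with sign +.
  cut_size E S = number of edges whose endpoints receive different signs.\<close>
definition cut_size :: "'a set set \<Rightarrow> 'a set \<Rightarrow> nat" where
  "cut_size E S = card {e\<in>E. e \<inter> S \<noteq> {} \<and> e - S \<noteq> {}}"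

definition Zw :: "'a set \<Rightarrow> 'a set set \<Rightarrow> ('a \<Rightarrow> nat) \<Rightarrow> real \<Rightarrow> ('a \<Rightarrow> complex) \<Rightarrow> complex" where
  "Zw V E w \<beta> z = (\<Sum>S\<in>Pow V. complex_of_real (\<beta> ^ cut_size E S) * (\<Prod>v\<in>S. z v ^ w v))"

definition DG :: "'a set \<Rightarrow> (('a \<Rightarrow> complex) \<Rightarrow> complex) \<Rightarrow> ('a \<Rightarrow> complex) \<Rightarrow> complex" where
  "DG V F z = (\<Sum>v\<in>V. z v * deriv (\<lambda>t. F (z(v := t))) (z v))"

end

theory Submission imports Defs "HOL-Computational_Algebra.Fundamental_Theorem_Algebra" begin

lemma para: "cmod (a + b)^2 + cmod (a - b)^2 = 2 * cmod a ^ 2 + 2 * cmod b ^ 2"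
  unfolding cmod_power2 by (simp add: power2_eq_square algebra_simps)

lemma lin_bound:
  fixes A B C D :: complex
  assumes H: "\<And>a b. cmod a < 1 \<Longrightarrow> cmod b < 1 \<Longrightarrow> A + B*a + C*b + D*a*b \<noteq> 0"
    and b: "cmod b < 1"
  shows "cmod (B + D*b) \<le> cmod (A + C*b)"
proof (rule ccontr)
  assume "\<not> ?thesis"
  hence lt: "cmod (A + C*b) < cmod (B + D*b)" by simp
  hence nz: "B + D*b \<noteq> 0" by auto
  define a where "a = - (A + C*b) / (B + D*b)"
  have "cmod a = cmod (A + C*b) / cmod (B + D*b)" unfolding a_def norm_divide norm_minus_cancel ..
  hence "cmod a < 1" using lt nz by (simp add: divide_less_eq)
  moreover have "A + B*a + C*b + D*a*b = 0"
    using nz by (simp add: a_def field_simps)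
  ultimately show False using H b by blast
qed

lemma asano:
  fixes A B C D :: complex
  assumes H: "\<And>a b. cmod a < 1 \<Longrightarrow> cmod b < 1 \<Longrightarrow> A + B*a + C*b + D*a*b \<noteq> 0"
    and z: "cmod z < 1"
  shows "A + D*z \<noteq> 0"
proof -
  have A0: "A \<noteq> 0" using H[of 0 0] by simp
  define r where "r = (1 + cmod z) / 2"
  have r0: "0 \<le> r" and r1: "r < 1" and rz: "cmod z < r" using z by (auto simp: r_def)
  have h1: "cmod (B + D*b) ^ 2 \<le> cmod (A + C*b) ^2" if "cmod b < 1" for b
    using lin_bound[OF H that] by (simp add: power_mono)
  have h2: "cmod (C + D*a) ^ 2 \<le> cmod (A + B*a) ^2" if "cmod a < 1" for a
  proof -
    have H': "A + C*b + B*a + D*b*a \<noteq> 0" if "cmod b < 1" "cmod a < 1" for a b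
      using H[OF that(2,1)] by (simp add: algebra_simps)
    show ?thesis using lin_bound[OF H' that] by (simp add: power_mono)
  qed
  have rr: "cmod (of_real r :: complex) < 1" "cmod (- of_real r :: complex) < 1" using r0 r1 by auto
  have e1: "2 * cmod B ^2 + 2 * cmod (D * of_real r)^2 \<le> 2 * cmod A ^2 + 2 * cmod (C * of_real r)^2"
  proof -
    have "cmod (B + D * of_real r) ^ 2 \<le> cmod (A + C * of_real r) ^2" using h1[OF rr(1)] .
    moreover have "cmod (B - D * of_real r) ^ 2 \<le> cmod (A - C * of_real r) ^2" using h1[OF rr(2)] by simp
    ultimately show ?thesis using para[of B "D * of_real r"] para[of A "C * of_real r"] by linarith
  qed
  have e2: "2 * cmod C ^2 + 2 * cmod (D * of_real r)^2 \<le> 2 * cmod A ^2 + 2 * cmod (B * of_real r)^2"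
  proof -
    have "cmod (C + D * of_real r) ^ 2 \<le> cmod (A + B * of_real r) ^2" using h2[OF rr(1)] .
    moreover have "cmod (C - D * of_real r) ^ 2 \<le> cmod (A - B * of_real r) ^2" using h2[OF rr(2)] by simp
    ultimately show ?thesis using para[of C "D * of_real r"] para[of A "B * of_real r"] by linarith
  qed
  have e3: "(r * cmod D)^2 \<le> cmod A ^ 2"
  proof -
    have "r^2 \<le> 1" using r0 r1 by (simp add: power_le_one)
    hence "r^2 * cmod B ^2 \<le> cmod B ^2" "r^2 * cmod C ^2 \<le> cmod C ^2"
      by (auto intro: mult_left_le_one_le)
    moreover have "2 * cmod B ^2 + 2 * (r^2 * cmod D^2) \<le> 2 * cmod A ^2 + 2 * (r^2 * cmod C^2)"
      using e1 by (simp add: norm_mult power_mult_distrib mult.commute)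
    moreover have "2 * cmod C ^2 + 2 * (r^2 * cmod D^2) \<le> 2 * cmod A ^2 + 2 * (r^2 * cmod B^2)"
      using e2 by (simp add: norm_mult power_mult_distrib mult.commute)
    ultimately show ?thesis by (simp add: power_mult_distrib)
  qed
  hence e4: "r * cmod D \<le> cmod A" using r0 by (simp add: abs_le_square_iff power2_le_iff_abs_le)
  show ?thesis
  proof (cases "D = 0")
    case True thus ?thesis using A0 by simp
  next
    case False
    hence "cmod (D*z) < r * cmod D" using rz by (simp add: norm_mult)
    hence "cmod (D*z) < cmod A" using e4 by simp
    thus ?thesis by (metis add_eq_0_iff norm_minus_cancel order_less_irrefl)
  qed
qed


lemma K_nz:
  fixes a b :: complex and \<beta> :: real
  assumes "0 < \<beta>" "\<beta> < 1" "cmod a < 1" "cmod b < 1"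
  shows "1 + \<beta>*a + \<beta>*b + a*b \<noteq> 0"
proof
  assume eq: "1 + \<beta>*a + \<beta>*b + a*b = 0"
  have "(\<beta> + a) * b + (1 + \<beta>*a) = 1 + \<beta>*a + \<beta>*b + a*b" by (simp add: algebra_simps)
  hence eq2: "(\<beta> + a) * b = - (1 + \<beta>*a)" using eq by (metis eq_neg_iff_add_eq_0)
  show False
  proof (cases "\<beta> + a = 0")
    case True
    hence "a = - \<beta>" by (simp add: add_eq_0_iff)
    hence "1 + \<beta>*a = of_real (1 - \<beta>^2)" by (simp add: power2_eq_square)
    moreover have "\<beta>^2 < 1" using assms by (simp add: abs_square_less_1)
    ultimately have "(of_real (1 - \<beta>^2) :: complex) = 0" using eq2 True by simp
    hence "1 - \<beta>^2 = 0" by (simp only: of_real_eq_0_iff)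
    thus False using \<open>\<beta>^2 < 1\<close> by simp
  next
    case False
    have "cmod (1 + \<beta>*a) = cmod (\<beta> + a) * cmod b"
      using eq2 by (metis norm_minus_cancel norm_mult)
    also have "\<dots> < cmod (\<beta> + a)" using False assms by simp
    finally have lt: "cmod (1 + \<beta>*a) < cmod (\<beta> + a)" .
    have "cmod (1 + \<beta>*a)^2 - cmod (\<beta> + a)^2 = (1 - \<beta>^2) * (1 - cmod a ^2)"
      unfolding cmod_power2 by (simp add: power2_eq_square algebra_simps)
    moreover have "(1 - \<beta>^2) * (1 - cmod a ^2) > 0"
      using assms by (simp add: abs_square_less_1)
    moreover have "cmod (1 + \<beta>*a)^2 < cmod (\<beta> + a)^2" using lt by (simp add: power_strict_mono)
    ultimately show False by linarith
  qed
qed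


lemma edge_step:
  fixes P0 P1 P2 P3 s t :: complex and \<beta> :: real
  assumes H: "\<And>s t. cmod s < 1 \<Longrightarrow> cmod t < 1 \<Longrightarrow> P0 + s * P1 + t * P2 + s * t * P3 \<noteq> 0"
    and b: "0 < \<beta>" "\<beta> < 1" and st: "cmod s < 1" "cmod t < 1"
  shows "P0 + (of_real \<beta>) * s * P1 + (of_real \<beta>) * t * P2 + s * t * P3 \<noteq> 0"
proof -
  have G: "(P0 + t * P2) * (1 + (of_real \<beta>) * y) + ((P1 + t * P3) * (of_real \<beta> + y)) * z \<noteq> 0"
    if t: "cmod t < 1" and y: "cmod y < 1" and z: "cmod z < 1" for t y z
  proof (rule asano[OF _ z])
    fix a c :: complex assume a: "cmod a < 1" and c: "cmod c < 1"
    have "(P0 + t * P2) * (1 + (of_real \<beta>) * y) + (P1 + t * P3) * (1 + (of_real \<beta>) * y) * a + (P0 + t * P2) * (of_real \<beta> + y) * c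
          + (P1 + t * P3) * (of_real \<beta> + y) * a * c
        = (P0 + a * P1 + t * P2 + a * t * P3)  *  (1 + (of_real \<beta>) * c + (of_real \<beta>) * y + c * y)"
      by (simp add: algebra_simps)
    also have "\<dots> \<noteq> 0" using H[OF a t] K_nz[OF b c y] by simp
    finally show "(P0 + t * P2) * (1 + (of_real \<beta>) * y) + (P1 + t * P3) * (1 + (of_real \<beta>) * y) * a + (P0 + t * P2) * (of_real \<beta> + y) * c
          + (P1 + t * P3) * (of_real \<beta> + y) * a * c \<noteq> 0" .
  qed
  have "(P0 + s * (of_real \<beta>) * P1) + ((of_real \<beta>) * P2 + s * P3) * t \<noteq> 0"
  proof (rule asano[OF _ st(2)])
    fix a c :: complex assume a: "cmod a < 1" and c: "cmod c < 1"
    have "(P0 + s * (of_real \<beta>) * P1) + (P2 + s * (of_real \<beta>) * P3) * a + ((of_real \<beta>) * P0 + s * P1) * c + ((of_real \<beta>) * P2 + s * P3) * a * c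
        = (P0 + a * P2) * (1 + (of_real \<beta>) * c) + ((P1 + a * P3) * (of_real \<beta> + c)) * s"
      by (simp add: algebra_simps)
    also have "\<dots> \<noteq> 0" using G[OF a c st(1)] .
    finally show "(P0 + s * (of_real \<beta>) * P1) + (P2 + s * (of_real \<beta>) * P3) * a + ((of_real \<beta>) * P0 + s * P1) * c + ((of_real \<beta>) * P2 + s * P3) * a * c \<noteq> 0" .
  qed
  thus ?thesis by (simp add: algebra_simps)
qed


definition Y :: "'a set \<Rightarrow> 'a set set \<Rightarrow> real \<Rightarrow> ('a \<Rightarrow> complex) \<Rightarrow> complex" where
  "Y V E \<beta> x = (\<Sum>S\<in>Pow V. complex_of_real (\<beta> ^ cut_size E S) * prod x S)"

definition Q :: "'a set \<Rightarrow> ('a set \<Rightarrow> complex) \<Rightarrow> 'a \<Rightarrow> 'a \<Rightarrow> bool \<Rightarrow> bool \<Rightarrow> ('a \<Rightarrow> complex) \<Rightarrow> complex" where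
  "Q V c u v a b x = (\<Sum>S\<in>Pow V. if (u\<in>S) = a \<and> (v\<in>S) = b then c S * prod x (S - {u,v}) else 0)"

lemma prod_upd2:
  assumes "finite S" "u \<noteq> v"
  shows "prod (x(u:=s, v:=t)) S = (if u\<in>S then s else 1) * (if v\<in>S then t else 1) * prod x (S - {u,v})"
proof -
  have "prod (x(u:=s, v:=t)) S = prod (x(u:=s, v:=t)) (S - (S \<inter> {u,v})) * prod (x(u:=s, v:=t)) (S \<inter> {u,v})"
    using assms by (intro prod.subset_diff) auto
  also have "S - (S \<inter> {u,v}) = S - {u,v}" by blast
  also have "prod (x(u:=s, v:=t)) (S - {u,v}) = prod x (S - {u,v})" by (rule prod.cong) auto
  also have "prod (x(u:=s, v:=t)) (S \<inter> {u,v}) = (if u\<in>S then s else 1) * (if v\<in>S then t else 1)"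
  proof -
    consider "u\<in>S" "v\<in>S" | "u\<in>S" "v\<notin>S" | "u\<notin>S" "v\<in>S" | "u\<notin>S" "v\<notin>S" by blast
    thus ?thesis
    proof cases
      case 1 hence "S \<inter> {u,v} = {u,v}" by blast
      thus ?thesis using 1 assms by simp
    next
      case 2 hence "S \<inter> {u,v} = {u}" by blast
      thus ?thesis using 2 assms by simp
    next
      case 3 hence "S \<inter> {u,v} = {v}" by blast
      thus ?thesis using 3 assms by simp
    next
      case 4 hence "S \<inter> {u,v} = {}" by blast
      thus ?thesis using 4 assms by simp
    qed
  qed
  finally show ?thesis by (metis mult.commute)
qed

lemma expand2:
  assumes "finite V" "u \<noteq> v"
  shows "(\<Sum>S\<in>Pow V. c S * prod (x(u:=s, v:=t)) S)
     = Q V c u v False False x + s * Q V c u v True False x + t * Q V c u v False True x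
       + s * t * Q V c u v True True x"
proof -
  have fin: "\<And>S. S \<in> Pow V \<Longrightarrow> finite S" using assms(1) finite_subset by auto
  have "(\<Sum>S\<in>Pow V. c S * prod (x(u:=s, v:=t)) S)
     = (\<Sum>S\<in>Pow V. (if (u\<in>S) = False \<and> (v\<in>S) = False then c S * prod x (S - {u,v}) else 0)
        + s * (if (u\<in>S) = True \<and> (v\<in>S) = False then c S * prod x (S - {u,v}) else 0)
        + t * (if (u\<in>S) = False \<and> (v\<in>S) = True then c S * prod x (S - {u,v}) else 0)
        + s * t * (if (u\<in>S) = True \<and> (v\<in>S) = True then c S * prod x (S - {u,v}) else 0))"
  proof (rule sum.cong[OF refl])
    fix S assume S: "S \<in> Pow V"
    show "c S * prod (x(u:=s, v:=t)) S = (if (u\<in>S) = False \<and> (v\<in>S) = False then c S * prod x (S - {u,v}) else 0)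
        + s * (if (u\<in>S) = True \<and> (v\<in>S) = False then c S * prod x (S - {u,v}) else 0)
        + t * (if (u\<in>S) = False \<and> (v\<in>S) = True then c S * prod x (S - {u,v}) else 0)
        + s * t * (if (u\<in>S) = True \<and> (v\<in>S) = True then c S * prod x (S - {u,v}) else 0)"
      unfolding prod_upd2[OF fin[OF S] assms(2)] by (auto simp: algebra_simps)
  qed
  also have "\<dots> = Q V c u v False False x + s * Q V c u v True False x + t * Q V c u v False True x
       + s * t * Q V c u v True True x" unfolding Q_def sum.distrib sum_distrib_left ..
  finally show ?thesis .
qed

lemma Q_scale:
  assumes "\<And>S. c' S = c S * k (u\<in>S) (v\<in>S)"
  shows "Q V c' u v a b x = k a b * Q V c u v a b x"
  unfolding Q_def sum_distrib_left by (rule sum.cong) (auto simp: assms)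


lemma cut_insert:
  assumes "finite F" "e \<notin> F"
  shows "cut_size (insert e F) S = cut_size F S + (if e \<inter> S \<noteq> {} \<and> e - S \<noteq> {} then 1 else 0)"
proof -
  have fin: "finite {e'\<in>F. e' \<inter> S \<noteq> {} \<and> e' - S \<noteq> {}}" using assms by simp
  show ?thesis
  proof (cases "e \<inter> S \<noteq> {} \<and> e - S \<noteq> {}")
    case True
    hence "{e'\<in>insert e F. e' \<inter> S \<noteq> {} \<and> e' - S \<noteq> {}} = insert e {e'\<in>F. e' \<inter> S \<noteq> {} \<and> e' - S \<noteq> {}}"
      by blast
    thus ?thesis using True fin assms by (simp add: cut_size_def)
  next
    case False
    hence "{e'\<in>insert e F. e' \<inter> S \<noteq> {} \<and> e' - S \<noteq> {}} = {e'\<in>F. e' \<inter> S \<noteq> {} \<and> e' - S \<noteq> {}}"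
      by blast
    thus ?thesis using False by (simp add: cut_size_def)
  qed
qed

lemma LY_disc:
  fixes \<beta> :: real
  assumes V: "finite V" and b: "0 < \<beta>" "\<beta> < 1"
  shows "finite F \<Longrightarrow> \<forall>e\<in>F. e \<subseteq> V \<and> card e = 2 \<Longrightarrow> \<forall>v\<in>V. cmod (x v) < 1 \<Longrightarrow> Y V F \<beta> x \<noteq> 0"
proof (induction F arbitrary: x rule: finite_induct)
  case empty
  have "Y V {} \<beta> x = (\<Sum>S\<in>Pow V. prod x S * prod (\<lambda>_. 1) (V - S))"
    by (simp add: Y_def cut_size_def)
  also have "\<dots> = (\<Prod>v\<in>V. x v + 1)" by (rule prod_add[OF V, symmetric])
  also have "\<dots> \<noteq> 0"
  proof -
    have "x v + 1 \<noteq> 0" if "v \<in> V" for v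
    proof
      assume "x v + 1 = 0"
      hence "x v = -1" by (simp add: eq_neg_iff_add_eq_0)
      thus False using empty.prems(2) that by auto
    qed
    thus ?thesis using V by simp
  qed
  finally show ?case .
next
  case (insert e F)
  have "card e = 2" using insert.prems(1) by simp
  then obtain u v where e: "e = {u,v}" and uv: "u \<noteq> v" by (auto simp: card_2_iff)
  have uV: "u \<in> V" and vV: "v \<in> V" using insert.prems(1) e by auto
  define c where "c S = complex_of_real (\<beta> ^ cut_size F S)" for S
  define c' where "c' S = complex_of_real (\<beta> ^ cut_size (insert e F) S)" for S
  define k where "k a b = (if a \<noteq> b then complex_of_real \<beta> else 1)" for a b :: bool
  have cc: "c' S = c S * k (u\<in>S) (v\<in>S)" for S
  proof -
    have "(e \<inter> S \<noteq> {} \<and> e - S \<noteq> {}) = ((u\<in>S) \<noteq> (v\<in>S))" using e by auto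
    thus ?thesis unfolding c'_def c_def k_def cut_insert[OF insert.hyps(1,2)] by (simp add: power_add)
  qed
  let ?P = "\<lambda>a b. Q V c u v a b x"
  have H: "?P False False + s * ?P True False + t * ?P False True + s * t * ?P True True \<noteq> 0"
    if "cmod s < 1" "cmod t < 1" for s t
  proof -
    have "Y V F \<beta> (x(u:=s, v:=t)) \<noteq> 0"
      apply (rule insert.IH)
      using insert.prems that by auto
    thus ?thesis unfolding Y_def c_def[symmetric] expand2[OF V uv] .
  qed
  have "?P False False + complex_of_real \<beta> * x u * ?P True False + complex_of_real \<beta> * x v * ?P False True
        + x u * x v * ?P True True \<noteq> 0"
    by (rule edge_step[OF H b]) (use insert.prems uV vV in auto)
  moreover have "Y V (insert e F) \<beta> x = Y V (insert e F) \<beta> (x(u:= x u, v:= x v))" by simp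
  moreover have "Y V (insert e F) \<beta> (x(u:= x u, v:= x v))
     = ?P False False + complex_of_real \<beta> * x u * ?P True False + complex_of_real \<beta> * x v * ?P False True
        + x u * x v * ?P True True"
    unfolding Y_def c'_def[symmetric] expand2[OF V uv] Q_scale[of c' c k, OF cc]
    by (simp add: k_def algebra_simps)
  ultimately show ?case by simp
qed


lemma cut_compl:
  assumes "\<forall>e\<in>E. e \<subseteq> V"
  shows "cut_size E (V - S) = cut_size E S"
proof -
  have "{e\<in>E. e \<inter> (V - S) \<noteq> {} \<and> e - (V - S) \<noteq> {}} = {e\<in>E. e \<inter> S \<noteq> {} \<and> e - S \<noteq> {}}"
    using assms by blast
  thus ?thesis by (simp add: cut_size_def)
qed

lemma Y_sym:
  assumes V: "finite V" and E: "\<forall>e\<in>E. e \<subseteq> V" and x: "\<forall>v\<in>V. x v \<noteq> 0"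
  shows "Y V E \<beta> x = prod x V * Y V E \<beta> (\<lambda>v. 1 / x v)"
proof -
  let ?c = "\<lambda>S. complex_of_real (\<beta> ^ cut_size E S)"
  have "prod x V * Y V E \<beta> (\<lambda>v. 1 / x v) = (\<Sum>S\<in>Pow V. ?c S * prod x (V - S))"
    unfolding Y_def sum_distrib_left
  proof (rule sum.cong[OF refl])
    fix S assume S: "S \<in> Pow V"
    have fS: "finite S" using S V finite_subset by auto
    have "prod x V = prod x (V - S) * prod x S" using S V by (intro prod.subset_diff) auto
    moreover have "prod x S * (\<Prod>v\<in>S. 1 / x v) = 1"
      unfolding prod.distrib[symmetric] using S x by (intro prod.neutral) auto
    ultimately show "prod x V * (?c S * (\<Prod>v\<in>S. 1 / x v)) = ?c S * prod x (V - S)"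
      by (simp add: algebra_simps)
  qed
  also have "\<dots> = (\<Sum>T\<in>Pow V. ?c T * prod x T)"
    by (rule sum.reindex_bij_witness[where i="\<lambda>S. V - S" and j="\<lambda>S. V - S"])
       (auto simp: cut_compl[OF E])
  finally show ?thesis unfolding Y_def by simp
qed

lemma LY_ext:
  fixes \<beta> :: real
  assumes V: "finite V" and b: "0 < \<beta>" "\<beta> < 1"
    and E: "finite E" "\<forall>e\<in>E. e \<subseteq> V \<and> card e = 2"
    and x: "\<forall>v\<in>V. cmod (x v) > 1"
  shows "Y V E \<beta> x \<noteq> 0"
proof -
  have x0: "\<forall>v\<in>V. x v \<noteq> 0" using x by auto
  have "Y V E \<beta> (\<lambda>v. 1 / x v) \<noteq> 0"
    using LY_disc[OF V b E] x by (simp add: norm_divide divide_less_eq)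
  moreover have "prod x V \<noteq> 0" using V x0 by simp
  ultimately show ?thesis using Y_sym[OF V _ x0] E(2) by auto
qed


lemma Re_inv_ge:
  fixes r :: complex
  assumes "cmod r \<le> 1" "r \<noteq> 1"
  shows "Re (1 / (1 - r)) \<ge> 1/2"
proof -
  have w0: "1 - r \<noteq> 0" using assms by simp
  have pos: "(Re (1 - r))^2 + (Im (1 - r))^2 > 0"
    using w0 by (metis complex_eq_iff zero_complex.sel sum_power2_gt_zero_iff)
  have "(Re r)^2 + (Im r)^2 \<le> 1" using assms(1) unfolding cmod_def
    by (metis real_sqrt_le_1_iff)
  hence "(Re (1 - r))^2 + (Im (1 - r))^2 \<le> 2 * Re (1 - r)"
    by (simp add: power2_eq_square algebra_simps)
  thus ?thesis using pos by (simp add: Re_divide divide_simps)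
qed

lemma rootsum:
  fixes p :: "complex poly"
  shows "poly p 1 \<noteq> 0 \<Longrightarrow> (\<forall>r. poly p r = 0 \<longrightarrow> cmod r \<le> 1) \<Longrightarrow> Polynomial.degree p = n
    \<Longrightarrow> Re (poly (pderiv p) 1 / poly p 1) \<ge> real n / 2"
proof (induction n arbitrary: p)
  case 0
  hence "pderiv p = 0" by (simp add: pderiv_eq_0_iff)
  thus ?case by simp
next
  case (Suc n)
  have "\<not> (\<exists>a l. a \<noteq> 0 \<and> l = 0 \<and> p = pCons a l)" using Suc.prems(3) by auto
  then obtain r where r: "poly p r = 0" using fundamental_theorem_of_algebra_alt by blast
  hence "[:-r, 1:] dvd p" by (simp add: dvd_iff_poly_eq_0)
  then obtain q where pq: "p = [:-r, 1:] * q" by (elim dvdE)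
  have p0: "p \<noteq> 0" using Suc.prems(1) by auto
  hence q0: "q \<noteq> 0" using pq by auto
  have "Polynomial.degree p = Polynomial.degree [:-r, 1:] + Polynomial.degree q"
    unfolding pq by (rule degree_mult_eq) (use q0 in auto)
  hence dq: "Polynomial.degree q = n" using Suc.prems(3) by simp
  have r1: "r \<noteq> 1" using r Suc.prems(1) by auto
  have rle: "cmod r \<le> 1" using r Suc.prems(2) by auto
  have q1: "poly q 1 \<noteq> 0" using Suc.prems(1) pq by simp
  have qr: "\<forall>s. poly q s = 0 \<longrightarrow> cmod s \<le> 1" using Suc.prems(2) pq by simp
  have IH: "Re (poly (pderiv q) 1 / poly q 1) \<ge> real n / 2" using Suc.IH[OF q1 qr dq] .
  have "poly (pderiv p) 1 = (1 - r) * poly (pderiv q) 1 + poly q 1"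
    unfolding pq pderiv_mult by (simp add: pderiv_pCons algebra_simps)
  moreover have "poly p 1 = (1 - r) * poly q 1" unfolding pq by (simp add: algebra_simps)
  ultimately have "poly (pderiv p) 1 / poly p 1 = ((1 - r) * poly (pderiv q) 1 + poly q 1) / ((1 - r) * poly q 1)"
    by simp
  also have "\<dots> = poly (pderiv q) 1 / poly q 1 + 1 / (1 - r)"
    using r1 q1 by (simp add: field_simps)
  finally have "poly (pderiv p) 1 / poly p 1 = poly (pderiv q) 1 / poly q 1 + 1 / (1 - r)" .
  hence "Re (poly (pderiv p) 1 / poly p 1) = Re (poly (pderiv q) 1 / poly q 1) + Re (1 / (1 - r))" by simp
  thus ?case using IH Re_inv_ge[OF rle r1] by simp
qed


lemma prod_upd1:
  assumes "finite S"
  shows "(\<Prod>u\<in>S. (z(v:=t)) u ^ w u) = (if v\<in>S then t ^ w v else 1) * (\<Prod>u\<in>S - {v}. z u ^ w u)"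
proof (cases "v \<in> S")
  case True
  have "(\<Prod>u\<in>S. (z(v:=t)) u ^ w u) = (z(v:=t)) v ^ w v * (\<Prod>u\<in>S - {v}. (z(v:=t)) u ^ w u)"
    using assms True by (rule prod.remove)
  also have "(\<Prod>u\<in>S - {v}. (z(v:=t)) u ^ w u) = (\<Prod>u\<in>S - {v}. z u ^ w u)"
    by (rule prod.cong) auto
  finally show ?thesis using True by simp
next
  case False
  hence "S - {v} = S" by blast
  thus ?thesis using False by (auto intro: prod.cong)
qed

lemma DG_formula:
  assumes V: "finite V"
  shows "DG V (Zw V E w \<beta>) z = (\<Sum>S\<in>Pow V. complex_of_real (\<beta> ^ cut_size E S) * (\<Prod>u\<in>S. z u ^ w u)
            * of_nat (\<Sum>v\<in>S. w v))"
proof -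
  let ?c = "\<lambda>S. complex_of_real (\<beta> ^ cut_size E S)"
  let ?R = "\<lambda>v S. \<Prod>u\<in>S - {v}. z u ^ w u"
  let ?X = "\<lambda>S. \<Prod>u\<in>S. z u ^ w u"
  have fin: "\<And>S. S \<in> Pow V \<Longrightarrow> finite S" using V finite_subset by auto
  have one: "z v * deriv (\<lambda>t. Zw V E w \<beta> (z(v := t))) (z v)
      = (\<Sum>S\<in>Pow V. if v \<in> S then ?c S * of_nat (w v) * ?X S else 0)" for v
  proof -
    have feq: "(\<lambda>t. Zw V E w \<beta> (z(v := t))) = (\<lambda>t. \<Sum>S\<in>Pow V. ?c S * ((if v\<in>S then t ^ w v else 1) * ?R v S))"
      unfolding Zw_def
    proof (rule ext, rule sum.cong[OF refl])
      fix t S assume S: "S \<in> Pow V"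
      show "?c S * (\<Prod>u\<in>S. (z(v := t)) u ^ w u) = ?c S * ((if v\<in>S then t ^ w v else 1) * ?R v S)"
        by (simp only: prod_upd1[OF fin[OF S]])
    qed
    have "((\<lambda>t. \<Sum>S\<in>Pow V. ?c S * ((if v\<in>S then t ^ w v else 1) * ?R v S)) has_field_derivative
        (\<Sum>S\<in>Pow V. ?c S * ((if v\<in>S then of_nat (w v) * z v ^ (w v - 1) else 0) * ?R v S))) (at (z v))"
    proof (rule DERIV_sum)
      fix S assume "S \<in> Pow V"
      show "((\<lambda>t. ?c S * ((if v\<in>S then t ^ w v else 1) * ?R v S)) has_field_derivative
         ?c S * ((if v\<in>S then of_nat (w v) * z v ^ (w v - 1) else 0) * ?R v S)) (at (z v))"
        by (cases "v \<in> S") (auto intro!: derivative_eq_intros)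
    qed
    hence "deriv (\<lambda>t. Zw V E w \<beta> (z(v := t))) (z v)
        = (\<Sum>S\<in>Pow V. ?c S * ((if v\<in>S then of_nat (w v) * z v ^ (w v - 1) else 0) * ?R v S))"
      unfolding feq by (rule DERIV_imp_deriv)
    hence "z v * deriv (\<lambda>t. Zw V E w \<beta> (z(v := t))) (z v)
        = (\<Sum>S\<in>Pow V. z v * (?c S * ((if v\<in>S then of_nat (w v) * z v ^ (w v - 1) else 0) * ?R v S)))"
      by (simp add: sum_distrib_left)
    also have "\<dots> = (\<Sum>S\<in>Pow V. if v \<in> S then ?c S * of_nat (w v) * ?X S else 0)"
    proof (rule sum.cong[OF refl])
      fix S assume S: "S \<in> Pow V"
      show "z v * (?c S * ((if v\<in>S then of_nat (w v) * z v ^ (w v - 1) else 0) * ?R v S))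
          = (if v \<in> S then ?c S * of_nat (w v) * ?X S else 0)"
      proof (cases "v \<in> S")
        case True
        have X: "?X S = z v ^ w v * ?R v S" using fin[OF S] True by (rule prod.remove)
        have "z v * z v ^ (w v - 1) * of_nat (w v) = z v ^ w v * of_nat (w v)"
          by (cases "w v") auto
        thus ?thesis using True X by (auto simp: algebra_simps)
      qed simp
    qed
    finally show ?thesis .
  qed
  have "DG V (Zw V E w \<beta>) z = (\<Sum>v\<in>V. \<Sum>S\<in>Pow V. if v \<in> S then ?c S * of_nat (w v) * ?X S else 0)"
    unfolding DG_def using one by simp
  also have "\<dots> = (\<Sum>S\<in>Pow V. \<Sum>v\<in>V. if v \<in> S then ?c S * of_nat (w v) * ?X S else 0)"
    by (rule sum.swap)
  also have "\<dots> = (\<Sum>S\<in>Pow V. ?c S * ?X S * of_nat (\<Sum>v\<in>S. w v))"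
  proof (rule sum.cong[OF refl])
    fix S assume S: "S \<in> Pow V"
    have "(\<Sum>v\<in>V. if v \<in> S then ?c S * of_nat (w v) * ?X S else 0) = (\<Sum>v\<in>V \<inter> S. ?c S * of_nat (w v) * ?X S)"
      using V by (rule sum.inter_restrict[symmetric])
    also have "V \<inter> S = S" using S by blast
    finally show "(\<Sum>v\<in>V. if v \<in> S then ?c S * of_nat (w v) * ?X S else 0) = ?c S * ?X S * of_nat (\<Sum>v\<in>S. w v)"
      by (simp add: sum_distrib_left sum_distrib_right algebra_simps)
  qed
  finally show ?thesis .
qed


theorem theorem4:
  fixes V :: "'a set" and E :: "'a set set" and w :: "'a \<Rightarrow> nat"
    and \<beta> :: real and z :: "'a \<Rightarrow> complex"
  assumes "simple_graph V E"
    and "legal_weight V E w"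
    and "0 < \<beta>" and "\<beta> < 1"
    and "\<forall>v\<in>V. 1 \<le> cmod (z v)"
    and "Zw V E w \<beta> z \<noteq> 0"
  shows "Re (DG V (Zw V E w \<beta>) z / Zw V E w \<beta> z) \<ge> real (card V) / 2"
proof -
  note b = assms(3,4)
  have V: "finite V" and Ecard: "\<forall>e\<in>E. e \<subseteq> V \<and> card e = 2"
    using assms(1) by (auto simp: simple_graph_def)
  have Efin: "finite E" using Ecard V by (meson PowI finite_Pow_iff finite_subset subsetI)
  have w1: "\<forall>v\<in>V. 1 \<le> w v" using assms(2) by (auto simp: legal_weight_def)
  have z0: "\<forall>v\<in>V. z v \<noteq> 0" using assms(5) by auto
  let ?c = "\<lambda>S. complex_of_real (\<beta> ^ cut_size E S)"
  let ?X = "\<lambda>S. \<Prod>u\<in>S. z u ^ w u"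
  let ?W = "\<lambda>S. \<Sum>v\<in>S. w v"
  define p where "p = (\<Sum>S\<in>Pow V. monom (?c S * ?X S) (?W S))"
  have polyp: "poly p l = (\<Sum>S\<in>Pow V. ?c S * ?X S * l ^ ?W S)" for l
    unfolding p_def poly_sum poly_monom ..
  have p1: "poly p 1 = Zw V E w \<beta> z" unfolding polyp Zw_def by simp
  have "pderiv p = (\<Sum>S\<in>Pow V. pderiv (monom (?c S * ?X S) (?W S)))"
    unfolding p_def using higher_pderiv_sum[of 1] by simp
  hence dp1: "poly (pderiv p) 1 = DG V (Zw V E w \<beta>) z"
    unfolding DG_formula[OF V] by (simp add: poly_sum pderiv_monom poly_monom algebra_simps)
  have roots: "\<forall>r. poly p r = 0 \<longrightarrow> cmod r \<le> 1"
  proof (intro allI impI, rule ccontr)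
    fix r assume pr: "poly p r = 0" and "\<not> cmod r \<le> 1"
    hence r1: "cmod r > 1" by simp
    have "poly p r = Y V E \<beta> (\<lambda>v. (r * z v) ^ w v)"
      unfolding polyp Y_def
    proof (rule sum.cong[OF refl])
      fix S assume S: "S \<in> Pow V"
      have "(\<Prod>v\<in>S. (r * z v) ^ w v) = (\<Prod>v\<in>S. r ^ w v) * ?X S"
        by (simp add: power_mult_distrib prod.distrib)
      also have "(\<Prod>v\<in>S. r ^ w v) = r ^ ?W S" by (simp add: power_sum)
      finally show "?c S * ?X S * r ^ ?W S = ?c S * (\<Prod>v\<in>S. (r * z v) ^ w v)" by simp
    qed
    moreover have "Y V E \<beta> (\<lambda>v. (r * z v) ^ w v) \<noteq> 0"
    proof (rule LY_ext[OF V b Efin Ecard], intro ballI)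
      fix v assume v: "v \<in> V"
      have "1 < cmod r * cmod (z v)" using r1 assms(5) v
        by (metis less_1_mult linorder_not_less mult.right_neutral mult_less_cancel_left1 order_le_less order_less_trans zero_less_one)
      hence "1 < (cmod r * cmod (z v)) ^ w v" using w1 v by (intro one_less_power) auto
      thus "1 < cmod ((r * z v) ^ w v)" by (simp add: norm_mult norm_power)
    qed
    ultimately show False using pr by simp
  qed
  have WV: "card V \<le> ?W V"
  proof -
    have "card V = (\<Sum>v\<in>V. (1::nat))" by simp
    also have "\<dots> \<le> ?W V" using w1 by (intro sum_mono) auto
    finally show ?thesis .
  qed
  have "coeff p (?W V) = (\<Sum>S\<in>Pow V. if ?W S = ?W V then ?c S * ?X S else 0)"
    unfolding p_def coeff_sum coeff_monom by simp
  also have "\<dots> = (\<Sum>S\<in>Pow V. if S = V then ?c S * ?X S else 0)"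
  proof (rule sum.cong[OF refl])
    fix S assume S: "S \<in> Pow V"
    have "?W S = ?W V \<longleftrightarrow> S = V"
    proof
      assume eq: "?W S = ?W V"
      have "?W V = ?W (V - S) + ?W S" using S V by (intro sum.subset_diff) auto
      hence "?W (V - S) = 0" using eq by simp
      hence "\<forall>v\<in>V - S. w v = 0" using V by simp
      have "V - S = {}"
      proof (rule ccontr)
        assume "V - S \<noteq> {}"
        then obtain v where v: "v \<in> V - S" by blast
        hence "w v = 0" "1 \<le> w v" using \<open>\<forall>v\<in>V - S. w v = 0\<close> w1 by auto
        thus False by simp
      qed
      thus "S = V" using S by blast
    qed simp
    thus "(if ?W S = ?W V then ?c S * ?X S else 0) = (if S = V then ?c S * ?X S else 0)" by simp
  qed
  also have "\<dots> = ?c V * ?X V" by (simp add: V)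
  finally have "coeff p (?W V) \<noteq> 0" using z0 V b by simp
  hence "?W V \<le> Polynomial.degree p" by (rule le_degree)
  hence "card V \<le> Polynomial.degree p" using WV by linarith
  hence "real (card V) / 2 \<le> real (Polynomial.degree p) / 2" by simp
  also have "\<dots> \<le> Re (poly (pderiv p) 1 / poly p 1)"
    using rootsum[OF _ roots refl] p1 assms(6) by simp
  finally show ?thesis unfolding p1 dp1 .
qed

end
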